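(* Let $n\ge 1$ and let $\mathbf{s}=[s_1,\dots,s_n]^T\in\mathbb{R}^n$ have pairwise distinct entries. Let $A_{\mathbf{s}}\in\mathbb{R}^{n\times n}$ be given by $A_{\mathbf{s}}[i,j]=|s_i-s_j|$, and let $\mathbb{1}\in\mathbb{R}^n$ be the all-ones column vector. Then for every $i,j\in\{1,\dots,n\}$, $$P_{\mathrm{sort}(\mathbf{s})}[i,j]=\begin{cases}1 & \text{if } j=\arg\max\big[(n+1-2i)\mathbf{s}-A_{\mathbf{s}}\mathbb{1}\big],\\ 0 & \text{otherwise,}\end{cases}$$ where the $\arg\max$ is taken over the $n$ coordinates of the vector $(n+1-2i)\mathbf{s}-A_{\mathbf{s}}\mathbb{1}$ (whose $j$-th coordinate is $(n+1-2i)s_j-\sum_{k=1}^n|s_j-s_k|$), and this maximizer is unique.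
   Context: A permutation $\mathbf{z}=[z_1,\dots,z_n]^T$ of $\{1,\dots,n\}$ has permutation matrix $P_{\mathbf{z}}\in\{0,1\}^{n\times n}$ with $P_{\mathbf{z}}[i,j]=1$ iff $j=z_i$. For $\mathbf{s}\in\mathbb{R}^n$, $\mathrm{sort}(\mathbf{s})$ is the permutation listing the indices of $\mathbf{s}$ in order of decreasing value: $z_1$ is the index of the largest entry, $z_2$ the index of the second largest, and so on (e.g. $\mathrm{sort}([9,1,5,2]^T)=[1,3,4,2]^T$). *)

theory Defs
  imports Complex_Main
begin

text \<open>Vectors in R^n are functions nat => real indexed by {1..n};
  permutations of {1..n} are functions nat => nat (z i = z_i for i in {1..n}).\<close>

definition perm_matrix :: "(nat \<Rightarrow> nat) \<Rightarrow> nat \<Rightarrow> nat \<Rightarrow> real" where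
  "perm_matrix z i j = (if j = z i then 1 else 0)"

definition sort_perm :: "nat \<Rightarrow> (nat \<Rightarrow> real) \<Rightarrow> (nat \<Rightarrow> nat)" where
  "sort_perm n s = (THE z. bij_betw z {1..n} {1..n} \<and>
      (\<forall>i\<in>{1..n}. \<forall>j\<in>{1..n}. i < j \<longrightarrow> s (z j) < s (z i)) \<and>
      (\<forall>i. i \<notin> {1..n} \<longrightarrow> z i = 0))"

definition abs_diff_matrix :: "(nat \<Rightarrow> real) \<Rightarrow> nat \<Rightarrow> nat \<Rightarrow> real" where
  "abs_diff_matrix s i j = \<bar>s i - s j\<bar>"

definition score_vec :: "nat \<Rightarrow> (nat \<Rightarrow> real) \<Rightarrow> nat \<Rightarrow> nat \<Rightarrow> real" where
  "score_vec n s i j = (real n + 1 - 2 * real i) * s j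
      - (\<Sum>k = 1..n. abs_diff_matrix s j k * 1)"

end

theory Submission
  imports Defs
begin

lemma score_strict:
  fixes A :: "nat set" and s :: "nat \<Rightarrow> real" and c :: real
  assumes fin: "finite A" and aA: "a \<in> A" and inj: "inj_on s A"
    and cg: "card {k\<in>A. s a < s k} = i - 1" and i1: "1 \<le> i" and bA: "b \<in> A" and ba: "b \<noteq> a"
    and cdef: "c = real (card A) + 1 - 2 * real i"
  shows "c * s b - (\<Sum>k\<in>A. \<bar>s b - s k\<bar>) < c * s a - (\<Sum>k\<in>A. \<bar>s a - s k\<bar>)"
proof -
  define t where "t = s a"
  define y where "y = s b"
  define G where "G = {k\<in>A. t < s k}"
  have yt: "y \<noteq> t" using inj aA bA ba unfolding y_def t_def inj_on_def by blast
  have finG: "finite G" using fin unfolding G_def by auto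
  have cG: "card G = i - 1" using cg unfolding G_def t_def by simp
  have GA: "G \<subseteq> A" unfolding G_def by auto
  have diff: "(\<Sum>k\<in>A. \<bar>y - s k\<bar>) - (\<Sum>k\<in>A. \<bar>t - s k\<bar>) = (\<Sum>k\<in>A. \<bar>y - s k\<bar> - \<bar>t - s k\<bar>)"
    by (simp add: sum_subtractf)
  show ?thesis
  proof (cases "y > t")
    case True
    have "(\<Sum>k\<in>A. (if k \<in> G then -(y-t) else (y-t))) \<le> (\<Sum>k\<in>A. \<bar>y - s k\<bar> - \<bar>t - s k\<bar>)"
      by (rule sum_mono) (auto simp: G_def abs_if)
    moreover have "(\<Sum>k\<in>A. (if k \<in> G then -(y-t) else (y-t))) = real (card G) * (-(y-t)) + real (card (A - G)) * (y-t)"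
      using fin GA by (simp add: sum.If_cases Int_absorb1 Diff_eq[symmetric])
    moreover have "real (card (A - G)) = real (card A) - real (card G)"
      using card_Diff_subset[OF finG GA] card_mono[OF fin GA] by simp
    ultimately have "(real (card A) - 2 * real (card G)) * (y - t) \<le> (\<Sum>k\<in>A. \<bar>y - s k\<bar> - \<bar>t - s k\<bar>)"
      by (simp add: algebra_simps)
    moreover have "real (card G) = real i - 1" using cG i1 by simp
    ultimately have "(real (card A) + 2 - 2 * real i) * (y - t) \<le> (\<Sum>k\<in>A. \<bar>y - s k\<bar> - \<bar>t - s k\<bar>)"
      by (simp add: algebra_simps)
    moreover have "c * (y - t) < (real (card A) + 2 - 2 * real i) * (y - t)"
    proof -
      have "(real (card A) + 2 - 2 * real i) * (y - t) = c * (y - t) + (y - t)"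
        unfolding cdef by (simp add: algebra_simps)
      thus ?thesis using True by simp
    qed
    ultimately show ?thesis using diff unfolding y_def[symmetric] t_def[symmetric]
      by (simp add: algebra_simps)
  next
    case False
    hence yt2: "y < t" using yt by simp
    define H where "H = insert a G"
    have aG: "a \<notin> G" unfolding G_def t_def by simp
    have cH: "card H = i" using cG i1 aG finG unfolding H_def by simp
    have HA: "H \<subseteq> A" using GA aA unfolding H_def by auto
    have finH: "finite H" using finG unfolding H_def by simp
    have "(\<Sum>k\<in>A. (if k \<in> H then (t-y) else -(t-y))) \<le> (\<Sum>k\<in>A. \<bar>y - s k\<bar> - \<bar>t - s k\<bar>)"
      using yt2 by (intro sum_mono) (auto simp: H_def G_def t_def abs_if)
    moreover have "(\<Sum>k\<in>A. (if k \<in> H then (t-y) else -(t-y))) = real (card H) * (t-y) + real (card (A - H)) * (-(t-y))"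
      using fin HA by (simp add: sum.If_cases Int_absorb1 Diff_eq[symmetric])
    moreover have "real (card (A - H)) = real (card A) - real (card H)"
      using card_Diff_subset[OF finH HA] card_mono[OF fin HA] by simp
    ultimately have "(2 * real i - real (card A)) * (t - y) \<le> (\<Sum>k\<in>A. \<bar>y - s k\<bar> - \<bar>t - s k\<bar>)"
      using cH by (simp add: algebra_simps)
    moreover have "c * (y - t) < (2 * real i - real (card A)) * (t - y)"
    proof -
      have "(2 * real i - real (card A)) * (t - y) = c * (y - t) + (t - y)"
        unfolding cdef by (simp add: algebra_simps)
      thus ?thesis using yt2 by simp
    qed
    ultimately show ?thesis using diff unfolding y_def[symmetric] t_def[symmetric]
      by (simp add: algebra_simps)
  qed
qed


definition rk :: "nat \<Rightarrow> (nat \<Rightarrow> real) \<Rightarrow> nat \<Rightarrow> nat" where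
  "rk n s j = card {k\<in>{1..n}. s j < s k} + 1"

lemma rk_less:
  assumes "a \<in> {1..n}" "b \<in> {1..n}" "s a < s b"
  shows "rk n s b < rk n s a"
proof -
  have "{k\<in>{1..n}. s b < s k} \<subset> {k\<in>{1..n}. s a < s k}"
    using assms by auto
  hence "card {k\<in>{1..n}. s b < s k} < card {k\<in>{1..n}. s a < s k}"
    by (intro psubset_card_mono) auto
  thus ?thesis unfolding rk_def by simp
qed

lemma rk_range:
  assumes "j \<in> {1..n}"
  shows "rk n s j \<in> {1..n}"
proof -
  have "{k\<in>{1..n}. s j < s k} \<subseteq> {1..n} - {j}" by auto
  hence "card {k\<in>{1..n}. s j < s k} \<le> card ({1..n} - {j})"
    by (intro card_mono) auto
  also have "\<dots> = n - 1" using assms by simp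
  finally have "card {k\<in>{1..n}. s j < s k} + 1 \<le> n" using assms by auto
  thus ?thesis unfolding rk_def by simp
qed

lemma rk_inj:
  assumes "inj_on s {1..n}"
  shows "inj_on (rk n s) {1..n}"
proof (rule inj_onI)
  fix a b assume ab: "a \<in> {1..n}" "b \<in> {1..n}" "rk n s a = rk n s b"
  show "a = b"
  proof (rule ccontr)
    assume "a \<noteq> b"
    hence "s a \<noteq> s b" using assms ab unfolding inj_on_def by blast
    hence "s a < s b \<or> s b < s a" by auto
    thus False using rk_less[where s=s, OF ab(1,2)] rk_less[where s=s, OF ab(2,1)] ab(3) by auto
  qed
qed

lemma rk_surj:
  assumes "inj_on s {1..n}"
  shows "rk n s ` {1..n} = {1..n}"
proof -
  have sub: "rk n s ` {1..n} \<subseteq> {1..n}" using rk_range by blast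
  have "card (rk n s ` {1..n}) = card {1..n}"
    using card_image[OF rk_inj[OF assms]] by simp
  thus ?thesis using card_subset_eq[OF _ sub] by simp
qed

lemma sorted_rk:
  assumes z: "bij_betw z {1..n} {1..n}"
    and mono: "\<forall>i\<in>{1..n}. \<forall>j\<in>{1..n}. i < j \<longrightarrow> s (z j) < s (z i)"
    and i: "i \<in> {1..n}"
  shows "rk n s (z i) = i"
proof -
  have "{k\<in>{1..n}. s (z i) < s k} = z ` {j\<in>{1..n}. j < i}"
  proof
    show "{k\<in>{1..n}. s (z i) < s k} \<subseteq> z ` {j\<in>{1..n}. j < i}"
    proof
      fix k assume k: "k \<in> {k\<in>{1..n}. s (z i) < s k}"
      then obtain j where j: "j \<in> {1..n}" "k = z j" using z unfolding bij_betw_def by blast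
      have "j < i"
      proof (rule ccontr)
        assume "\<not> j < i"
        hence "j = i \<or> i < j" by auto
        thus False using mono i j k by force
      qed
      thus "k \<in> z ` {j\<in>{1..n}. j < i}" using j by auto
    qed
    show "z ` {j\<in>{1..n}. j < i} \<subseteq> {k\<in>{1..n}. s (z i) < s k}"
      using mono i z unfolding bij_betw_def by auto
  qed
  moreover have "inj_on z {j\<in>{1..n}. j < i}"
    using z unfolding bij_betw_def by (auto intro: inj_on_subset)
  moreover have "{j\<in>{1..n}. j < i} = {1..<i}" using i by auto
  ultimately have "card {k\<in>{1..n}. s (z i) < s k} = i - 1"
    by (simp add: card_image)
  thus ?thesis unfolding rk_def using i by simp
qed

lemma sort_perm_char:
  assumes "inj_on s {1..n}" and i: "i \<in> {1..n}"
  shows "sort_perm n s i \<in> {1..n} \<and> rk n s (sort_perm n s i) = i"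
proof -
  define P where "P = (\<lambda>z. bij_betw z {1..n} {1..n} \<and>
      (\<forall>i\<in>{1..n}. \<forall>j\<in>{1..n}. i < j \<longrightarrow> s (z j) < s (z i)) \<and>
      (\<forall>i. i \<notin> {1..n} \<longrightarrow> z i = (0::nat)))"
  define z0 where "z0 = (\<lambda>i. if i \<in> {1..n} then the_inv_into {1..n} (rk n s) i else 0)"
  have injr: "inj_on (rk n s) {1..n}" using rk_inj[OF assms(1)] .
  have surjr: "rk n s ` {1..n} = {1..n}" using rk_surj[OF assms(1)] .
  have bijr: "bij_betw (rk n s) {1..n} {1..n}" using injr surjr unfolding bij_betw_def by simp
  have z0in: "z0 j \<in> {1..n} \<and> rk n s (z0 j) = j" if "j \<in> {1..n}" for j
    using that the_inv_into_into[OF injr, of j "{1..n}"] f_the_inv_into_f[OF injr, of j] surjr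
    unfolding z0_def by auto
  have Pz0: "P z0"
    unfolding P_def
  proof (intro conjI)
    have "bij_betw (the_inv_into {1..n} (rk n s)) {1..n} {1..n}"
      using bij_betw_the_inv_into[OF bijr] .
    thus "bij_betw z0 {1..n} {1..n}"
      by (rule bij_betw_cong[THEN iffD1, rotated]) (simp add: z0_def)
    show "\<forall>i\<in>{1..n}. \<forall>j\<in>{1..n}. i < j \<longrightarrow> s (z0 j) < s (z0 i)"
    proof (intro ballI impI)
      fix a b assume ab: "a \<in> {1..n}" "b \<in> {1..n}" "a < b"
      show "s (z0 b) < s (z0 a)"
      proof (rule ccontr)
        assume "\<not> s (z0 b) < s (z0 a)"
        hence "s (z0 a) = s (z0 b) \<or> s (z0 a) < s (z0 b)" by auto
        thus False
        proof
          assume "s (z0 a) = s (z0 b)"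
          hence "z0 a = z0 b" using assms(1) z0in[OF ab(1)] z0in[OF ab(2)] unfolding inj_on_def by blast
          thus False using z0in[OF ab(1)] z0in[OF ab(2)] ab(3) by auto
        next
          assume "s (z0 a) < s (z0 b)"
          thus False using rk_less[of "z0 a" n "z0 b" s] z0in[OF ab(1)] z0in[OF ab(2)] ab(3) by auto
        qed
      qed
    qed
    show "\<forall>i. i \<notin> {1..n} \<longrightarrow> z0 i = 0" unfolding z0_def by simp
  qed
  have uniq: "z = z0" if "P z" for z
  proof
    fix j show "z j = z0 j"
    proof (cases "j \<in> {1..n}")
      case True
      have zj: "z j \<in> {1..n}" using that True unfolding P_def bij_betw_def by auto
      have "rk n s (z j) = j" using sorted_rk[of z n s j] that True unfolding P_def by blast
      thus ?thesis using z0in[OF True] zj injr unfolding inj_on_def by metis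
    next
      case False
      have "z j = 0" using that False unfolding P_def by blast
      moreover have "z0 j = 0" using False unfolding z0_def by (simp del: atLeastAtMost_iff)
      ultimately show ?thesis by simp
    qed
  qed
  have "sort_perm n s = (THE z. P z)" unfolding sort_perm_def P_def by (rule refl)
  also have "\<dots> = z0" by (rule the_equality[where P=P, OF Pz0 uniq])
  finally have "sort_perm n s = z0" .
  thus ?thesis using z0in[OF i] by simp
qed

lemma score_max:
  assumes inj: "inj_on s {1..n}" and i: "i \<in> {1..n}" and j: "j \<in> {1..n}"
    and ja: "j \<noteq> sort_perm n s i"
  shows "score_vec n s i j < score_vec n s i (sort_perm n s i)"
proof -
  define a where "a = sort_perm n s i"
  have a: "a \<in> {1..n}" "rk n s a = i" using sort_perm_char[OF inj i] unfolding a_def by auto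
  have cg: "card {k\<in>{1..n}. s a < s k} = i - 1" using a(2) unfolding rk_def by simp
  have "(real n + 1 - 2 * real i) * s j - (\<Sum>k\<in>{1..n}. \<bar>s j - s k\<bar>)
      < (real n + 1 - 2 * real i) * s a - (\<Sum>k\<in>{1..n}. \<bar>s a - s k\<bar>)"
    by (rule score_strict[OF _ a(1) inj cg _ j]) (use i ja a_def in auto)
  thus ?thesis unfolding score_vec_def abs_diff_matrix_def a_def by simp
qed

theorem corollary1:
  fixes n :: nat and s :: "nat \<Rightarrow> real"
  assumes "n \<ge> 1"
    and "inj_on s {1..n}"
  shows "\<forall>i\<in>{1..n}.
           (\<exists>!j. j \<in> {1..n} \<and> (\<forall>k\<in>{1..n}. score_vec n s i k \<le> score_vec n s i j)) \<and>
           (\<forall>j\<in>{1..n}. perm_matrix (sort_perm n s) i j =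
              (if j = arg_max_on (score_vec n s i) {1..n} then 1 else 0))"
proof
  fix i assume i: "i \<in> {1..n}"
  define a where "a = sort_perm n s i"
  have a: "a \<in> {1..n}" using sort_perm_char[OF assms(2) i] unfolding a_def by auto
  have lt: "\<And>j. j \<in> {1..n} \<Longrightarrow> j \<noteq> a \<Longrightarrow> score_vec n s i j < score_vec n s i a"
    using score_max[OF assms(2) i] unfolding a_def by blast
  have le: "\<forall>k\<in>{1..n}. score_vec n s i k \<le> score_vec n s i a"
    using lt by (metis order_le_less order_refl)
  have ex1: "\<exists>!j. j \<in> {1..n} \<and> (\<forall>k\<in>{1..n}. score_vec n s i k \<le> score_vec n s i j)"
  proof (rule ex1I[of _ a])
    show "a \<in> {1..n} \<and> (\<forall>k\<in>{1..n}. score_vec n s i k \<le> score_vec n s i a)" using a le by blast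
    fix j assume "j \<in> {1..n} \<and> (\<forall>k\<in>{1..n}. score_vec n s i k \<le> score_vec n s i j)"
    thus "j = a" using lt a by (meson not_le)
  qed
  have am: "arg_max_on (score_vec n s i) {1..n} = a"
    unfolding arg_max_on_def
  proof (rule arg_maxI[where Q = "\<lambda>x. x = a"])
    show "a \<in> {1..n}" by (rule a)
    show "\<And>y. y \<in> {1..n} \<Longrightarrow> \<not> score_vec n s i a < score_vec n s i y" using le by (simp add: not_less)
    fix x assume "x \<in> {1..n}" "\<forall>y. y \<in> {1..n} \<longrightarrow> \<not> score_vec n s i x < score_vec n s i y"
    thus "x = a" using lt a by blast
  qed
  show "(\<exists>!j. j \<in> {1..n} \<and> (\<forall>k\<in>{1..n}. score_vec n s i k \<le> score_vec n s i j)) \<and>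
           (\<forall>j\<in>{1..n}. perm_matrix (sort_perm n s) i j =
              (if j = arg_max_on (score_vec n s i) {1..n} then 1 else 0))"
    using ex1 am unfolding perm_matrix_def a_def by simp
qed

end
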